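(* Let $X$ be a finite set with a probability measure $\mu$, let $f\in\Delta_X$, let $\mathcal F_0$ be a finite collection of real-valued functions on $X$, and let $\delta>0$. Consider the dual optimization problem \[ \text{maximize } \; -\log\Big(\mathbb E_\mu \exp\Big(\sum_{\varphi\in\mathcal F_0}\lambda_\varphi\varphi\Big)\Big) + \sum_{\varphi\in\mathcal F_0}\lambda_\varphi\big(\langle f,\varphi\rangle - \delta\big) \quad\text{subject to } \lambda_\varphi\ge 0 \;\;\forall\varphi\in\mathcal F_0. \] If $\{\lambda^*_\varphi\}$ is an optimal solution of this problem, then \[ \sum_{\varphi\in\mathcal F_0}\lambda^*_\varphi \le \frac{\mathrm{Ent}_\mu(f)}{\delta}. \]
   Context: $\langle f,g\rangle = \sum_{x\in X}\mu(x)f(x)g(x)$, $\mathbb E_\mu h = \sum_x\mu(x)h(x)$, $\Delta_X = \{f:X\to[0,\infty) : \mathbb E_\mu f = 1\}$, and $\mathrm{Ent}_\mu(f) = \mathbb E_\mu[f\log f]$ (with $0\log 0=0$). The displayed problem is the Lagrangian dual of the primal problem: minimize $\mathrm{Ent}_\mu(g)$ over $g\in\Delta_X$ subject to $\langle g,\varphi\rangle\ge\langle f,\varphi\rangle-\delta$ for all $\varphi\in\mathcal F_0$. *)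

theory Defs
  imports "HOL-Analysis.Analysis"
begin

definition prob_fn :: "('a::finite \<Rightarrow> real) \<Rightarrow> bool" where
  "prob_fn \<mu> \<longleftrightarrow> (\<forall>x. 0 \<le> \<mu> x) \<and> (\<Sum>x\<in>UNIV. \<mu> x) = 1"

definition Emu :: "('a::finite \<Rightarrow> real) \<Rightarrow> ('a \<Rightarrow> real) \<Rightarrow> real" where
  "Emu \<mu> h = (\<Sum>x\<in>UNIV. \<mu> x * h x)"

definition ip :: "('a::finite \<Rightarrow> real) \<Rightarrow> ('a \<Rightarrow> real) \<Rightarrow> ('a \<Rightarrow> real) \<Rightarrow> real" where
  "ip \<mu> f g = (\<Sum>x\<in>UNIV. \<mu> x * f x * g x)"

definition Delta :: "('a::finite \<Rightarrow> real) \<Rightarrow> ('a \<Rightarrow> real) set" where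
  "Delta \<mu> = {f. (\<forall>x. 0 \<le> f x) \<and> Emu \<mu> f = 1}"

text \<open>Entropy; note Isabelle's ln 0 = 0, so 0 * ln 0 = 0 as required.\<close>
definition Ent :: "('a::finite \<Rightarrow> real) \<Rightarrow> ('a \<Rightarrow> real) \<Rightarrow> real" where
  "Ent \<mu> f = Emu \<mu> (\<lambda>x. f x * ln (f x))"

definition dual_obj :: "('a::finite \<Rightarrow> real) \<Rightarrow> ('a \<Rightarrow> real) \<Rightarrow> ('a \<Rightarrow> real) set
    \<Rightarrow> real \<Rightarrow> (('a \<Rightarrow> real) \<Rightarrow> real) \<Rightarrow> real" where
  "dual_obj \<mu> f F0 \<delta> lam =
     - ln (Emu \<mu> (\<lambda>x. exp (\<Sum>\<phi>\<in>F0. lam \<phi> * \<phi> x)))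
     + (\<Sum>\<phi>\<in>F0. lam \<phi> * (ip \<mu> f \<phi> - \<delta>))"

definition dual_optimal :: "('a::finite \<Rightarrow> real) \<Rightarrow> ('a \<Rightarrow> real) \<Rightarrow> ('a \<Rightarrow> real) set
    \<Rightarrow> real \<Rightarrow> (('a \<Rightarrow> real) \<Rightarrow> real) \<Rightarrow> bool" where
  "dual_optimal \<mu> f F0 \<delta> lam \<longleftrightarrow>
     (\<forall>\<phi>\<in>F0. 0 \<le> lam \<phi>) \<and>
     (\<forall>lam'. (\<forall>\<phi>\<in>F0. 0 \<le> lam' \<phi>) \<longrightarrow> dual_obj \<mu> f F0 \<delta> lam' \<le> dual_obj \<mu> f F0 \<delta> lam)"

end

theory Submission
  imports Defs
begin

lemma pw:
  fixes m fx s z :: real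
  assumes "0 \<le> m" "0 \<le> fx" "z > 0"
  shows "m * fx * (s - ln fx - ln z) \<le> m * exp s / z - m * fx"
proof (cases "fx = 0")
  case True thus ?thesis using assms by simp
next
  case False
  hence fp: "fx > 0" using assms by simp
  have "ln (exp s / (fx * z)) \<le> exp s / (fx * z) - 1"
    by (rule ln_le_minus_one) (use fp assms in simp)
  moreover have "ln (exp s / (fx * z)) = s - ln fx - ln z"
    using fp assms by (simp add: ln_div ln_mult)
  ultimately have "s - ln fx - ln z \<le> exp s / (fx * z) - 1" by simp
  hence "m * fx * (s - ln fx - ln z) \<le> m * fx * (exp s / (fx * z) - 1)"
    using assms fp by (intro mult_left_mono) auto
  also have "\<dots> = m * exp s / z - m * fx" using fp by (simp add: field_simps)
  finally show ?thesis .
qed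

lemma dv:
  fixes \<mu> f S :: "'a::finite \<Rightarrow> real"
  assumes "prob_fn \<mu>" and "f \<in> Delta \<mu>"
  shows "Emu \<mu> (\<lambda>x. f x * S x) - Ent \<mu> f \<le> ln (Emu \<mu> (\<lambda>x. exp (S x)))"
proof -
  have m0: "\<And>x. 0 \<le> \<mu> x" and m1: "(\<Sum>x\<in>UNIV. \<mu> x) = 1" using assms(1) by (auto simp: prob_fn_def)
  have f0: "\<And>x. 0 \<le> f x" and f1: "(\<Sum>x\<in>UNIV. \<mu> x * f x) = 1"
    using assms(2) by (auto simp: Delta_def Emu_def)
  define Z where "Z = (\<Sum>x\<in>UNIV. \<mu> x * exp (S x))"
  have "\<exists>x. \<mu> x > 0"
  proof (rule ccontr)
    assume "\<not> ?thesis" hence "\<And>x. \<mu> x = 0" using m0 by (metis less_eq_real_def)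
    thus False using m1 by simp
  qed
  then obtain x0 where x0: "\<mu> x0 > 0" by blast
  have "0 < \<mu> x0 * exp (S x0)" using x0 by simp
  also have "\<dots> \<le> Z" unfolding Z_def
    by (rule member_le_sum) (use m0 in auto)
  finally have Zp: "Z > 0" .
  have "(\<Sum>x\<in>UNIV. \<mu> x * f x * (S x - ln (f x) - ln Z)) \<le> (\<Sum>x\<in>UNIV. \<mu> x * exp (S x) / Z - \<mu> x * f x)"
    by (rule sum_mono) (rule pw[OF m0 f0 Zp])
  also have "\<dots> = 0"
    using Zp f1 by (simp add: sum_subtractf sum_divide_distrib[symmetric] Z_def)
  finally have "(\<Sum>x\<in>UNIV. \<mu> x * f x * (S x - ln (f x) - ln Z)) \<le> 0" .
  moreover have "(\<Sum>x\<in>UNIV. \<mu> x * f x * (S x - ln (f x) - ln Z)) =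
     Emu \<mu> (\<lambda>x. f x * S x) - Ent \<mu> f - ln Z * (\<Sum>x\<in>UNIV. \<mu> x * f x)"
    unfolding Ent_def Emu_def
    by (simp add: algebra_simps sum_subtractf sum_distrib_left sum.distrib)
  ultimately show ?thesis using f1 by (simp add: Z_def Emu_def)
qed

theorem lemma2p3:
  fixes \<mu> f :: "'a::finite \<Rightarrow> real" and F0 :: "('a \<Rightarrow> real) set"
    and \<delta> :: real and lam :: "('a \<Rightarrow> real) \<Rightarrow> real"
  assumes "prob_fn \<mu>" and "f \<in> Delta \<mu>" and "finite F0" and "\<delta> > 0"
    and "dual_optimal \<mu> f F0 \<delta> lam"
  shows "(\<Sum>\<phi>\<in>F0. lam \<phi>) \<le> Ent \<mu> f / \<delta>"
proof -
  have m1: "(\<Sum>x\<in>UNIV. \<mu> x) = 1" using assms(1) by (auto simp: prob_fn_def)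
  have "dual_obj \<mu> f F0 \<delta> (\<lambda>_. 0) \<le> dual_obj \<mu> f F0 \<delta> lam"
    using assms(5) unfolding dual_optimal_def by auto
  moreover have "dual_obj \<mu> f F0 \<delta> (\<lambda>_. 0) = 0"
    unfolding dual_obj_def Emu_def using m1 by simp
  ultimately have D: "0 \<le> dual_obj \<mu> f F0 \<delta> lam" by simp
  define S where "S = (\<lambda>x. \<Sum>\<phi>\<in>F0. lam \<phi> * \<phi> x)"
  have eq: "(\<Sum>\<phi>\<in>F0. lam \<phi> * ip \<mu> f \<phi>) = Emu \<mu> (\<lambda>x. f x * S x)"
    unfolding ip_def Emu_def S_def
    by (simp add: sum_distrib_left sum_distrib_right algebra_simps sum.swap[of _ F0])
  have "dual_obj \<mu> f F0 \<delta> lam = - ln (Emu \<mu> (\<lambda>x. exp (S x))) + (\<Sum>\<phi>\<in>F0. lam \<phi> * ip \<mu> f \<phi>)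
        - \<delta> * (\<Sum>\<phi>\<in>F0. lam \<phi>)"
    unfolding dual_obj_def S_def
    by (simp add: algebra_simps sum_subtractf sum_distrib_left)
  hence "dual_obj \<mu> f F0 \<delta> lam = - ln (Emu \<mu> (\<lambda>x. exp (S x))) + Emu \<mu> (\<lambda>x. f x * S x)
        - \<delta> * (\<Sum>\<phi>\<in>F0. lam \<phi>)" using eq by simp
  with D dv[OF assms(1,2), of S] have "\<delta> * (\<Sum>\<phi>\<in>F0. lam \<phi>) \<le> Ent \<mu> f" by linarith
  thus ?thesis using assms(4) by (simp add: field_simps)
qed

end
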